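(* Let $B$ be an admissible Banach sequence space, $X$ a Banach space, $\|\cdot\|_m$ ($m\in\mathbb Z$) norms on $X$ each equivalent to the norm of $X$, and $(A_m)_{m\in\mathbb Z}$ a sequence of bounded linear operators on $X$. If $(A_m)_{m\in\mathbb Z}$ admits an exponential dichotomy with respect to the sequence of norms $\|\cdot\|_m$, then the operator $T_B\colon\mathcal D(T_B)\to Y_B$ is bijective (invertible).
   Context: Banach sequence spaces: let $\mathcal S$ be the set of real sequences $(s_n)_{n\in\mathbb Z}$. A linear subspace $B\subset\mathcal S$ with norm $\|\cdot\|_B$ is a normed sequence space if $\mathbf{s}'\in B$ and $|s_n|\le|s'_n|$ for all $n$ imply $\mathbf{s}\in B$ and $\|\mathbf{s}\|_B\le\|\mathbf{s}'\|_B$; it is a Banach sequence space if complete. It is admissible if (i) $\chi_{\{n\}}\in B$ and $\|\chi_{\{n\}}\|_B>0$ for all $n\in\mathbb Z$; (ii) for all $\mathbf{s}\in B$, $m\in\mathbb Z$ the shift $(s_{n+m})_n$ is in $B$ with norm at most $N\|\mathbf{s}\|_B$ for a fixed $N>0$. $Y_B$ is the space of sequences $\mathbf{x}=(x_n)_{n\in\mathbb Z}$ in $X$ with $(\|x_n\|_n)_n\in B$, normed by $\|\mathbf{x}\|_{Y_B}=\|(\|x_n\|_n)_n\|_B$. $T_B$ is defined by $(T_B\mathbf{x})_n=x_n-A_{n-1}x_{n-1}$ on the domain $\mathcal D(T_B)=\{\mathbf{x}\in Y_B: T_B\mathbf{x}\in Y_B\}$. Set $\mathcal A(n,m)=A_{n-1}\cdots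 A_m$ for $n>m$ and $\mathcal A(m,m)=\mathrm{Id}$. The sequence $(A_m)$ admits an exponential dichotomy with respect to the norms $\|\cdot\|_m$ if: (1) there are projections $P_m\colon X\to X$ with $A_mP_m=P_{m+1}A_m$ for all $m$, such that each $A_m|_{\ker P_m}\colon\ker P_m\to\ker P_{m+1}$ is invertible; (2) there are constants $D>0$ and $0<\lambda<1<\mu$ such that for all $x\in X$, $\|\mathcal A(n,m)P_mx\|_n\le D\lambda^{n-m}\|x\|_m$ for $n\ge m$, and $\|\mathcal A(n,m)Q_mx\|_n\le D\mu^{n-m}\|x\|_m$ for $n\le m$, where $Q_m=\mathrm{Id}-P_m$ and, for $n<m$, $\mathcal A(n,m)=(\mathcal A(m,n)|_{\ker P_n})^{-1}\colon\ker P_m\to\ker P_n$. *)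

theory Defs
  imports "HOL-Analysis.Analysis"
begin

definition banach_seq_space :: "(int \<Rightarrow> real) set \<Rightarrow> ((int \<Rightarrow> real) \<Rightarrow> real) \<Rightarrow> bool" where
  "banach_seq_space B nB \<longleftrightarrow>
     \<comment> \<open>linear subspace\<close>
     (\<lambda>n. 0) \<in> B \<and>
     (\<forall>s\<in>B. \<forall>t\<in>B. (\<lambda>n. s n + t n) \<in> B) \<and>
     (\<forall>s\<in>B. \<forall>c::real. (\<lambda>n. c * s n) \<in> B) \<and>
     \<comment> \<open>norm on B\<close>
     (\<forall>s\<in>B. 0 \<le> nB s) \<and>
     (\<forall>s\<in>B. nB s = 0 \<longleftrightarrow> s = (\<lambda>n. 0)) \<and>
     (\<forall>s\<in>B. \<forall>t\<in>B. nB (\<lambda>n. s n + t n) \<le> nB s + nB t) \<and>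
     (\<forall>s\<in>B. \<forall>c::real. nB (\<lambda>n. c * s n) = \<bar>c\<bar> * nB s) \<and>
     \<comment> \<open>solidity (normed sequence space)\<close>
     (\<forall>s t. t \<in> B \<and> (\<forall>n. \<bar>s n\<bar> \<le> \<bar>t n\<bar>) \<longrightarrow> s \<in> B \<and> nB s \<le> nB t) \<and>
     \<comment> \<open>completeness\<close>
     (\<forall>f :: nat \<Rightarrow> int \<Rightarrow> real.
        (\<forall>k. f k \<in> B) \<and> (\<forall>e>0. \<exists>N. \<forall>i\<ge>N. \<forall>j\<ge>N. nB (\<lambda>n. f i n - f j n) < e)
        \<longrightarrow> (\<exists>s\<in>B. (\<lambda>k. nB (\<lambda>n. f k n - s n)) \<longlonglongrightarrow> 0))"

definition admissible :: "(int \<Rightarrow> real) set \<Rightarrow> ((int \<Rightarrow> real) \<Rightarrow> real) \<Rightarrow> bool" where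
  "admissible B nB \<longleftrightarrow>
     (\<forall>n::int. (\<lambda>k. if k = n then 1 else 0) \<in> B \<and> nB (\<lambda>k. if k = n then 1 else 0) > 0) \<and>
     (\<exists>N>0. \<forall>s\<in>B. \<forall>m::int. (\<lambda>n. s (n + m)) \<in> B \<and> nB (\<lambda>n. s (n + m)) \<le> N * nB s)"

definition equiv_norm :: "('a::real_normed_vector \<Rightarrow> real) \<Rightarrow> bool" where
  "equiv_norm nm \<longleftrightarrow>
     (\<forall>x y. nm (x + y) \<le> nm x + nm y) \<and>
     (\<forall>c x. nm (c *\<^sub>R x) = \<bar>c\<bar> * nm x) \<and>
     (\<forall>x. 0 \<le> nm x) \<and> (\<forall>x. nm x = 0 \<longleftrightarrow> x = 0) \<and>
     (\<exists>c C. 0 < c \<and> 0 < C \<and> (\<forall>x. c * norm x \<le> nm x \<and> nm x \<le> C * norm x))"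

definition YB :: "(int \<Rightarrow> real) set \<Rightarrow> (int \<Rightarrow> 'a \<Rightarrow> real) \<Rightarrow> (int \<Rightarrow> 'a) set" where
  "YB B nrm = {x. (\<lambda>n. nrm n (x n)) \<in> B}"

definition normYB :: "((int \<Rightarrow> real) \<Rightarrow> real) \<Rightarrow> (int \<Rightarrow> 'a \<Rightarrow> real) \<Rightarrow> (int \<Rightarrow> 'a) \<Rightarrow> real" where
  "normYB nB nrm x = nB (\<lambda>n. nrm n (x n))"

definition TB :: "(int \<Rightarrow> 'a::real_vector \<Rightarrow> 'a) \<Rightarrow> (int \<Rightarrow> 'a) \<Rightarrow> (int \<Rightarrow> 'a)" where
  "TB A x = (\<lambda>n. x n - A (n - 1) (x (n - 1)))"

definition domTB :: "(int \<Rightarrow> real) set \<Rightarrow> (int \<Rightarrow> 'a \<Rightarrow> real) \<Rightarrow> (int \<Rightarrow> 'a::real_vector \<Rightarrow> 'a) \<Rightarrow> (int \<Rightarrow> 'a) set" where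
  "domTB B nrm A = {x \<in> YB B nrm. TB A x \<in> YB B nrm}"

text \<open>Cocycle: cocyc A m k = A(m+k-1) \<circ> ... \<circ> A(m), i.e. \<A>(m+k, m).\<close>

fun cocyc :: "(int \<Rightarrow> 'a \<Rightarrow> 'a) \<Rightarrow> int \<Rightarrow> nat \<Rightarrow> 'a \<Rightarrow> 'a" where
  "cocyc A m 0 = id"
| "cocyc A m (Suc k) = A (m + int k) \<circ> cocyc A m k"

definition evol :: "(int \<Rightarrow> 'a \<Rightarrow> 'a) \<Rightarrow> int \<Rightarrow> int \<Rightarrow> 'a \<Rightarrow> 'a" where
  "evol A n m = cocyc A m (nat (n - m))"

text \<open>\<A>(n,m) on ker P_m for n \<le> m: inverse of \<A>(m,n) restricted to ker P_n.\<close>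
definition evol_back :: "(int \<Rightarrow> 'a \<Rightarrow> 'a) \<Rightarrow> (int \<Rightarrow> 'a \<Rightarrow> 'a::real_vector) \<Rightarrow> int \<Rightarrow> int \<Rightarrow> 'a \<Rightarrow> 'a" where
  "evol_back A P n m = inv_into {y. P n y = 0} (evol A m n)"

definition exp_dichotomy :: "(int \<Rightarrow> 'a::real_normed_vector \<Rightarrow> 'a) \<Rightarrow> (int \<Rightarrow> 'a \<Rightarrow> real) \<Rightarrow> bool" where
  "exp_dichotomy A nrm \<longleftrightarrow>
    (\<exists>P :: int \<Rightarrow> 'a \<Rightarrow> 'a.
       (\<forall>m. bounded_linear (P m) \<and> P m \<circ> P m = P m) \<and>
       (\<forall>m. A m \<circ> P m = P (m + 1) \<circ> A m) \<and>
       (\<forall>m. bij_betw (A m) {x. P m x = 0} {x. P (m + 1) x = 0}) \<and>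
       (\<exists>D lam mu. D > 0 \<and> 0 < lam \<and> lam < 1 \<and> 1 < mu \<and>
          (\<forall>x n m. n \<ge> m \<longrightarrow>
             nrm n (evol A n m (P m x)) \<le> D * lam powr real_of_int (n - m) * nrm m x) \<and>
          (\<forall>x n m. n \<le> m \<longrightarrow>
             nrm n (evol_back A P n m (x - P m x)) \<le> D * mu powr real_of_int (n - m) * nrm m x)))"

end

theory Submission
  imports Defs
begin



locale dich =
  fixes B :: "(int \<Rightarrow> real) set" and nB :: "(int \<Rightarrow> real) \<Rightarrow> real"
    and nrm :: "int \<Rightarrow> 'a::banach \<Rightarrow> real"
    and A :: "int \<Rightarrow> 'a \<Rightarrow> 'a"
    and P :: "int \<Rightarrow> 'a \<Rightarrow> 'a"
    and D lam mu N :: real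
  assumes bsp: "banach_seq_space B nB"
  and chi: "\<And>n. (\<lambda>k. if k = n then 1 else 0) \<in> B \<and> nB (\<lambda>k. if k = n then 1 else 0) > 0"
  and Npos: "N > 0"
  and shift: "\<And>s m. s \<in> B \<Longrightarrow> (\<lambda>n. s (n + m)) \<in> B \<and> nB (\<lambda>n. s (n + m)) \<le> N * nB s"
  and eqn: "\<And>m. equiv_norm (nrm m)"
  and Alin: "\<And>m. bounded_linear (A m)"
  and Plin: "\<And>m. bounded_linear (P m)"
  and Pidem: "\<And>m x. P m (P m x) = P m x"
  and comm: "\<And>m x. A m (P m x) = P (m + 1) (A m x)"
  and Abij: "\<And>m. bij_betw (A m) {x. P m x = 0} {x. P (m + 1) x = 0}"
  and Dpos: "D > 0" and lam: "0 < lam" "lam < 1" and mu: "1 < mu"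
  and est1: "\<And>x n m. n \<ge> m \<Longrightarrow>
             nrm n (evol A n m (P m x)) \<le> D * lam powr real_of_int (n - m) * nrm m x"
  and est2: "\<And>x n m. n \<le> m \<Longrightarrow>
             nrm n (evol_back A P n m (x - P m x)) \<le> D * mu powr real_of_int (n - m) * nrm m x"
begin

lemma B0: "(\<lambda>n. 0) \<in> B" using bsp unfolding banach_seq_space_def by blast
lemma Badd: "s \<in> B \<Longrightarrow> t \<in> B \<Longrightarrow> (\<lambda>n. s n + t n) \<in> B" using bsp unfolding banach_seq_space_def by blast
lemma Bscale: "s \<in> B \<Longrightarrow> (\<lambda>n. c * s n) \<in> B" using bsp unfolding banach_seq_space_def by blast
lemma Bnn: "s \<in> B \<Longrightarrow> 0 \<le> nB s" using bsp unfolding banach_seq_space_def by blast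
lemma Bzero: "s \<in> B \<Longrightarrow> nB s = 0 \<longleftrightarrow> s = (\<lambda>n. 0)" using bsp unfolding banach_seq_space_def by blast
lemma Btri: "s \<in> B \<Longrightarrow> t \<in> B \<Longrightarrow> nB (\<lambda>n. s n + t n) \<le> nB s + nB t" using bsp unfolding banach_seq_space_def by blast
lemma Bhom: "s \<in> B \<Longrightarrow> nB (\<lambda>n. c * s n) = \<bar>c\<bar> * nB s" using bsp unfolding banach_seq_space_def by blast
lemma Bsolid: "t \<in> B \<Longrightarrow> (\<And>n. \<bar>s n\<bar> \<le> \<bar>t n\<bar>) \<Longrightarrow> s \<in> B \<and> nB s \<le> nB t"
  using bsp unfolding banach_seq_space_def by blast
lemma Bcomplete: "(\<And>k. f k \<in> B) \<Longrightarrow> (\<forall>e>0. \<exists>M. \<forall>i\<ge>M. \<forall>j\<ge>M. nB (\<lambda>n. f i n - f j n) < e)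
        \<Longrightarrow> (\<exists>s\<in>B. (\<lambda>k. nB (\<lambda>n. f k n - s n)) \<longlonglongrightarrow> 0)"
  using bsp unfolding banach_seq_space_def by blast

lemma Bdiff: "s \<in> B \<Longrightarrow> t \<in> B \<Longrightarrow> (\<lambda>n. s n - t n) \<in> B"
proof -
  assume "s \<in> B" "t \<in> B"
  then have "(\<lambda>n. s n + (-1) * t n) \<in> B" by (intro Badd Bscale)
  then show ?thesis by simp
qed

lemma Bneg_norm: "s \<in> B \<Longrightarrow> t \<in> B \<Longrightarrow> nB (\<lambda>n. s n - t n) = nB (\<lambda>n. t n - s n)"
proof -
  assume st: "s \<in> B" "t \<in> B"
  have "nB (\<lambda>n. (-1) * (t n - s n)) = nB (\<lambda>n. t n - s n)"
    using Bhom[OF Bdiff[OF st(2,1)], of "-1"] by simp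
  then show ?thesis by simp
qed

definition "Kc = N / nB (\<lambda>k. if k = 0 then 1 else 0)"

lemma Kc_pos: "Kc > 0" using chi[of 0] Npos unfolding Kc_def by simp

lemma pointwise: assumes s: "s \<in> B" shows "\<bar>s m\<bar> \<le> Kc * nB s"
proof -
  define e :: "int \<Rightarrow> int \<Rightarrow> real" where "e = (\<lambda>m k. if k = m then (1::real) else 0)"
  have sol: "(\<lambda>k. \<bar>s m\<bar> * e m k) \<in> B \<and> nB (\<lambda>k. \<bar>s m\<bar> * e m k) \<le> nB s"
    by (rule Bsolid[OF s]) (auto simp: e_def)
  have "nB (\<lambda>k. \<bar>s m\<bar> * e m k) = \<bar>s m\<bar> * nB (e m)"
    using Bhom[of "e m" "\<bar>s m\<bar>"] chi[of m] by (simp add: e_def)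
  with sol have h1: "\<bar>s m\<bar> * nB (e m) \<le> nB s" by simp
  have "(\<lambda>n. e m (n + m)) = e 0" by (auto simp: e_def)
  then have h2: "nB (e 0) \<le> N * nB (e m)" using shift[of "e m" m] chi[of m] by (simp add: e_def)
  have "\<bar>s m\<bar> * nB (e 0) \<le> \<bar>s m\<bar> * (N * nB (e m))"
    by (rule mult_left_mono[OF h2]) simp
  also have "\<dots> = N * (\<bar>s m\<bar> * nB (e m))" by simp
  also have "\<dots> \<le> N * nB s" using h1 Npos by simp
  finally have "\<bar>s m\<bar> * nB (e 0) \<le> N * nB s" .
  moreover have "nB (e 0) > 0" using chi[of 0] by (simp add: e_def)
  moreover have "nB (\<lambda>k. if k = 0 then 1 else 0) = nB (e 0)" by (simp add: e_def)
  ultimately show ?thesis unfolding Kc_def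
    by (simp add: field_simps)
qed

lemma B_dom: assumes "s \<in> B" "\<And>n. 0 \<le> w n" "\<And>n. w n \<le> s n" shows "w \<in> B"
  using Bsolid[OF assms(1), of w] assms(2,3) by (smt (verit))

lemma B_sum: "finite S \<Longrightarrow> (\<And>l. l \<in> S \<Longrightarrow> g l \<in> B) \<Longrightarrow>
   (\<lambda>n. \<Sum>l\<in>S. g l n) \<in> B \<and> nB (\<lambda>n. \<Sum>l\<in>S. g l n) \<le> (\<Sum>l\<in>S. nB (g l))"
proof (induction S rule: finite_induct)
  case empty
  then show ?case using B0 Bzero[OF B0] by simp
next
  case (insert x F)
  then have IH: "(\<lambda>n. \<Sum>l\<in>F. g l n) \<in> B" "nB (\<lambda>n. \<Sum>l\<in>F. g l n) \<le> (\<Sum>l\<in>F. nB (g l))" by auto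
  have gx: "g x \<in> B" using insert by auto
  show ?case using insert(1,2) Badd[OF gx IH(1)] Btri[OF gx IH(1)] IH(2) by simp
qed

end


context dich begin

lemma conv:
  assumes t: "t \<in> B" and c: "\<And>j. 0 \<le> c j" "summable c"
  shows "\<exists>s\<in>B. \<forall>n. (\<lambda>j. c j * t (n + \<sigma> j)) sums s n"
proof -
  define g where "g = (\<lambda>l n. c l * t (n + \<sigma> l))"
  define f where "f = (\<lambda>K n. \<Sum>l<K. g l n)"
  have gB: "g l \<in> B" for l unfolding g_def using shift[OF t, of "\<sigma> l"] by (intro Bscale) auto
  have gn: "nB (g l) \<le> c l * (N * nB t)" for l
    using Bhom[of "\<lambda>n. t (n + \<sigma> l)" "c l"] shift[OF t, of "\<sigma> l"] c(1)[of l]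
    unfolding g_def by (simp add: mult_left_mono)
  have fB: "f K \<in> B" for K unfolding f_def using B_sum[of "{..<K}" g] gB by auto
  have diff: "nB (\<lambda>n. f i n - f j n) \<le> (\<Sum>l\<in>{j..<i}. c l) * (N * nB t)" if "j \<le> i" for i j
  proof -
    have "(\<lambda>n. f i n - f j n) = (\<lambda>n. \<Sum>l\<in>{j..<i}. g l n)"
      unfolding f_def using that by (simp add: lessThan_atLeast0 sum_diff_nat_ivl)
    moreover have "nB (\<lambda>n. \<Sum>l\<in>{j..<i}. g l n) \<le> (\<Sum>l\<in>{j..<i}. nB (g l))"
      using B_sum[of "{j..<i}" g] gB by auto
    moreover have "(\<Sum>l\<in>{j..<i}. nB (g l)) \<le> (\<Sum>l\<in>{j..<i}. c l * (N * nB t))"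
      by (intro sum_mono gn)
    ultimately show ?thesis by (simp add: sum_distrib_right)
  qed
  have Ct: "0 \<le> N * nB t" using Npos Bnn[OF t] by simp
  have cauchy: "\<forall>e>0. \<exists>M. \<forall>i\<ge>M. \<forall>j\<ge>M. nB (\<lambda>n. f i n - f j n) < e"
  proof (intro allI impI)
    fix e :: real assume e: "e > 0"
    define e' where "e' = e / (N * nB t + 1)"
    have e': "e' > 0" using e Ct unfolding e'_def by simp
    obtain M where M: "\<forall>m\<ge>M. \<forall>n. norm (sum c {m..<n}) < e'"
      using c(2) e' unfolding summable_Cauchy by blast
    have key: "nB (\<lambda>n. f i n - f j n) < e" if "M \<le> j" "j \<le> i" for i j
    proof -
      have "norm (sum c {j..<i}) < e'" using M that by blast
      then have "sum c {j..<i} < e'" by simp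
      moreover have "0 \<le> sum c {j..<i}" using c(1) by (simp add: sum_nonneg)
      ultimately have "sum c {j..<i} * (N * nB t) \<le> e' * (N * nB t)"
        using Ct by (simp add: mult_right_mono)
      also have "\<dots> = e * ((N * nB t) / (N * nB t + 1))" by (simp add: e'_def)
      also have "\<dots> < e"
      proof -
        have "(N * nB t) / (N * nB t + 1) < 1" using Ct by simp
        then have "e * ((N * nB t) / (N * nB t + 1)) < e * 1" by (rule mult_strict_left_mono[OF _ e])
        then show ?thesis by simp
      qed
      finally show ?thesis using diff[OF that(2)] by simp
    qed
    show "\<exists>M. \<forall>i\<ge>M. \<forall>j\<ge>M. nB (\<lambda>n. f i n - f j n) < e"
    proof (intro exI allI impI)
      fix i j assume "M \<le> i" "M \<le> j"
      show "nB (\<lambda>n. f i n - f j n) < e"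
      proof (cases "j \<le> i")
        case True then show ?thesis using key \<open>M \<le> j\<close> by blast
      next
        case False
        then have "nB (\<lambda>n. f j n - f i n) < e" using key \<open>M \<le> i\<close> by simp
        then show ?thesis using Bneg_norm[OF fB fB, of i j] by simp
      qed
    qed
  qed
  obtain s where s: "s \<in> B" "(\<lambda>k. nB (\<lambda>n. f k n - s n)) \<longlonglongrightarrow> 0"
    using Bcomplete[OF fB cauchy] by blast
  have "(\<lambda>j. c j * t (n + \<sigma> j)) sums s n" for n
  proof -
    have le: "norm (f k n - s n) \<le> Kc * nB (\<lambda>n. f k n - s n)" for k
      using pointwise[OF Bdiff[OF fB[of k] s(1)], of n] by simp
    have lim: "(\<lambda>k. Kc * nB (\<lambda>n. f k n - s n)) \<longlonglongrightarrow> 0"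
      using tendsto_mult_right_zero[OF s(2), of Kc] .
    have "(\<lambda>k. f k n - s n) \<longlonglongrightarrow> 0"
      by (rule Lim_null_comparison[OF always_eventually lim]) (use le in blast)
    then have "(\<lambda>k. f k n) \<longlonglongrightarrow> s n" by (simp only: LIM_zero_iff)
    then show ?thesis unfolding sums_def f_def g_def .
  qed
  with s(1) show ?thesis by blast
qed

lemma nrm_tri: "nrm m (x + y) \<le> nrm m x + nrm m y" using eqn[of m] unfolding equiv_norm_def by blast
lemma nrm_scale: "nrm m (c *\<^sub>R x) = \<bar>c\<bar> * nrm m x" using eqn[of m] unfolding equiv_norm_def by blast
lemma nrm_nn: "0 \<le> nrm m x" using eqn[of m] unfolding equiv_norm_def by blast
lemma nrm_zero: "nrm m x = 0 \<longleftrightarrow> x = 0" using eqn[of m] unfolding equiv_norm_def by blast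
lemma nrm_equiv: "\<exists>c C. 0 < c \<and> 0 < C \<and> (\<forall>x. c * norm x \<le> nrm m x \<and> nrm m x \<le> C * norm x)"
  using eqn[of m] unfolding equiv_norm_def by blast
lemma nrm_neg: "nrm m (- x) = nrm m x" using nrm_scale[of m "-1" x] by simp
lemma nrm_diff: "nrm m (x - y) \<le> nrm m x + nrm m y"
  using nrm_tri[of m x "-y"] nrm_neg[of m y] by simp
lemma nrm_lower: "\<exists>c>0. \<forall>x. norm x \<le> c * nrm m x"
proof -
  obtain c C where cC: "0 < c" "\<forall>x. c * norm x \<le> nrm m x" using nrm_equiv[of m] by blast
  have "norm x \<le> (1/c) * nrm m x" for x
  proof -
    have "norm x * c \<le> nrm m x" using cC(2) by (simp add: mult.commute)
    then have "norm x \<le> nrm m x / c" using cC(1) by (simp add: pos_le_divide_eq)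
    then show ?thesis by simp
  qed
  then show ?thesis using cC(1) by (intro exI[of _ "1/c"]) auto
qed

lemma nrm_tendsto: assumes "X \<longlonglongrightarrow> x" shows "(\<lambda>k. nrm m (X k)) \<longlonglongrightarrow> nrm m x"
proof -
  obtain c C where cC: "0 < C" "\<forall>x. nrm m x \<le> C * norm x" using nrm_equiv[of m] by blast
  have lip: "\<bar>nrm m a - nrm m b\<bar> \<le> C * norm (a - b)" for a b
  proof -
    have "nrm m a \<le> nrm m (a - b) + nrm m b" using nrm_tri[of m "a - b" b] by simp
    moreover have "nrm m b \<le> nrm m (b - a) + nrm m a" using nrm_tri[of m "b - a" a] by simp
    moreover have "nrm m (b - a) = nrm m (a - b)" using nrm_neg[of m "a - b"] by simp
    moreover have "nrm m (a - b) \<le> C * norm (a - b)" using cC by blast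
    ultimately show ?thesis by linarith
  qed
  have "(\<lambda>k. norm (X k - x)) \<longlonglongrightarrow> 0" using assms by (simp add: LIM_zero_iff tendsto_norm_zero)
  then have "(\<lambda>k. C * norm (X k - x)) \<longlonglongrightarrow> 0" using tendsto_mult_right_zero by blast
  then have "(\<lambda>k. nrm m (X k) - nrm m x) \<longlonglongrightarrow> 0"
    by (rule Lim_null_comparison[rotated]) (use lip in auto)
  then show ?thesis by (simp add: LIM_zero_iff)
qed

lemma nrm_suminf_le:
  assumes u: "summable u" and g: "summable g" and le: "\<And>j. nrm m (u j) \<le> g j"
  shows "nrm m (suminf u) \<le> suminf g"
proof -
  have g0: "0 \<le> g j" for j using le[of j] nrm_nn[of m "u j"] by linarith
  have "(\<lambda>K. nrm m (\<Sum>j<K. u j)) \<longlonglongrightarrow> nrm m (suminf u)"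
    by (rule nrm_tendsto) (use u in \<open>simp add: summable_LIMSEQ\<close>)
  moreover have "nrm m (\<Sum>j<K. u j) \<le> suminf g" for K
  proof -
    have "nrm m (\<Sum>j\<in>F. u j) \<le> (\<Sum>j\<in>F. nrm m (u j))" if "finite F" for F
      using that
    proof (induction F rule: finite_induct)
      case empty then show ?case using nrm_zero[of m 0] by simp
    next
      case (insert a F)
      have "nrm m (\<Sum>j\<in>insert a F. u j) = nrm m (u a + (\<Sum>j\<in>F. u j))" using insert(1,2) by simp
      also have "\<dots> \<le> nrm m (u a) + nrm m (\<Sum>j\<in>F. u j)" by (rule nrm_tri)
      also have "\<dots> \<le> nrm m (u a) + (\<Sum>j\<in>F. nrm m (u j))" using insert(3) by simp
      finally show ?case using insert(1,2) by simp
    qed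
    then have "nrm m (\<Sum>j<K. u j) \<le> (\<Sum>j<K. g j)"
      using sum_mono[of "{..<K}" "\<lambda>j. nrm m (u j)" g] le by (meson finite_lessThan order_trans)
    also have "\<dots> \<le> suminf g" using g g0 by (intro sum_le_suminf) auto
    finally show ?thesis .
  qed
  ultimately show ?thesis by (intro LIMSEQ_le_const2) auto
qed

end


context dich begin

lemma cocyc_Suc': "cocyc A m (Suc k) = cocyc A (m + 1) k \<circ> A m"
proof (induction k)
  case 0 then show ?case by simp
next
  case (Suc k)
  have "cocyc A m (Suc (Suc k)) = A (m + int (Suc k)) \<circ> cocyc A m (Suc k)" by simp
  also have "\<dots> = A (m + 1 + int k) \<circ> (cocyc A (m + 1) k \<circ> A m)"
  proof -
    have e: "m + int (Suc k) = m + 1 + int k" by simp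
    show ?thesis by (simp only: Suc.IH e)
  qed
  also have "\<dots> = cocyc A (m + 1) (Suc k) \<circ> A m" by (simp add: comp_assoc)
  finally show ?case .
qed

lemma cocyc_blinear: "bounded_linear (cocyc A m k)"
proof (induction k)
  case 0 then show ?case by (simp add: id_def)
next
  case (Suc k)
  then show ?case using bounded_linear_compose[OF Alin Suc] by (simp add: comp_def)
qed

lemma cocyc_diff: "cocyc A m k (x - y) = cocyc A m k x - cocyc A m k y"
  using linear_diff[OF bounded_linear.linear[OF cocyc_blinear]] .

lemma A_diff: "A m (x - y) = A m x - A m y"
  using linear_diff[OF bounded_linear.linear[OF Alin]] .
lemma A_0: "A m 0 = 0"
  using linear_0[OF bounded_linear.linear[OF Alin]] .
lemma P_diff: "P m (x - y) = P m x - P m y"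
  using linear_diff[OF bounded_linear.linear[OF Plin]] .

lemma cocyc_P: "cocyc A m k (P m x) = P (m + int k) (cocyc A m k x)"
proof (induction k)
  case 0 then show ?case by simp
next
  case (Suc k)
  then show ?case by (simp add: comm ac_simps)
qed

lemma cocyc_bij: "bij_betw (cocyc A m k) {x. P m x = 0} {x. P (m + int k) x = 0}"
proof (induction k)
  case 0 then show ?case by (auto simp: bij_betw_def)
next
  case (Suc k)
  have "bij_betw (A (m + int k) \<circ> cocyc A m k) {x. P m x = 0} {x. P (m + int k + 1) x = 0}"
    by (rule bij_betw_trans[OF Suc Abij])
  then show ?case by (simp add: ac_simps comp_def)
qed

lemma evol_eq: "evol A (m + int k) m = cocyc A m k" by (simp add: evol_def)

lemma evol_bij: "n \<le> m \<Longrightarrow> bij_betw (evol A m n) {x. P n x = 0} {x. P m x = 0}"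
  using cocyc_bij[of n "nat (m - n)"] by (simp add: evol_def)

lemma evol_back_prop:
  assumes "n \<le> m" "P m z = 0"
  shows "P n (evol_back A P n m z) = 0" "evol A m n (evol_back A P n m z) = z"
proof -
  have b: "bij_betw (evol A m n) {x. P n x = 0} {x. P m x = 0}" using evol_bij[OF assms(1)] .
  then have z: "z \<in> evol A m n ` {x. P n x = 0}" using assms(2) by (simp add: bij_betw_def)
  show "P n (evol_back A P n m z) = 0"
    using inv_into_into[OF z] unfolding evol_back_def by simp
  show "evol A m n (evol_back A P n m z) = z"
    using f_inv_into_f[OF z] unfolding evol_back_def .
qed

lemma evol_back_eq:
  assumes "n \<le> m" "P n w = 0" "evol A m n w = z"
  shows "evol_back A P n m z = w"
  unfolding evol_back_def
  by (rule inv_into_f_eq[OF bij_betw_imp_inj_on[OF evol_bij[OF assms(1)]]]) (use assms in auto)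

lemma A_evol_back:
  assumes "n \<le> m" "P m z = 0"
  shows "A (n - 1) (evol_back A P (n - 1) m z) = evol_back A P n m z"
proof -
  define w where "w = evol_back A P (n - 1) m z"
  have w: "P (n - 1) w = 0" "evol A m (n - 1) w = z"
    using evol_back_prop[of "n - 1" m z] assms unfolding w_def by auto
  have Pw: "P n (A (n - 1) w) = 0"
    using comm[of "n - 1" w] w(1) A_0 by simp
  have eq: "nat (m - (n - 1)) = Suc (nat (m - n))" using assms(1) by simp
  have "evol A m (n - 1) = cocyc A (n - 1) (Suc (nat (m - n)))" by (simp only: evol_def eq)
  also have "\<dots> = cocyc A n (nat (m - n)) \<circ> A (n - 1)"
    using cocyc_Suc'[of "n - 1" "nat (m - n)"] by (simp only: diff_add_cancel)
  finally have "evol A m (n - 1) w = cocyc A n (nat (m - n)) (A (n - 1) w)" by simp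
  then have "evol A m n (A (n - 1) w) = z" using w(2) by (simp add: evol_def)
  then show ?thesis using evol_back_eq[OF assms(1) Pw] unfolding w_def by simp
qed

end


context dich begin

lemma geo_zero:
  assumes a: "0 \<le> (a::real)" and q: "0 < q" "q < 1" and le: "\<And>j. a \<le> C * q ^ j"
  shows "a = 0"
proof -
  have "(\<lambda>j. q ^ j) \<longlonglongrightarrow> 0" using q by (intro LIMSEQ_power_zero) simp
  then have "(\<lambda>j. C * q ^ j) \<longlonglongrightarrow> 0" using tendsto_mult_right_zero by blast
  then have "a \<le> 0" by (rule LIMSEQ_le_const) (use le in blast)
  with a show ?thesis by simp
qed

lemma lam_pow: "lam powr real_of_int (int j) = lam ^ j"
  using powr_realpow[OF lam(1), of j] by simp

lemma mu_pow: "mu powr real_of_int (- int j) = inverse mu ^ j"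
proof -
  have "mu powr real_of_int (- int j) = inverse (mu powr real j)" by (simp add: powr_minus)
  also have "\<dots> = inverse mu ^ j" using powr_realpow[of mu j] mu by (simp add: power_inverse)
  finally show ?thesis .
qed

lemma YB_bound: assumes "z \<in> YB B nrm" shows "nrm k (z k) \<le> Kc * nB (\<lambda>k. nrm k (z k))"
proof -
  have "(\<lambda>k. nrm k (z k)) \<in> B" using assms by (simp add: YB_def)
  from pointwise[OF this, of k] show ?thesis by simp
qed

lemma inj_core:
  assumes z: "z \<in> YB B nrm" and hrec: "\<And>n. z n = A (n - 1) (z (n - 1))"
  shows "z m0 = 0"
proof -
  define M where "M = Kc * nB (\<lambda>k. nrm k (z k))"
  have bd: "nrm k (z k) \<le> M" for k unfolding M_def by (rule YB_bound[OF z])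
  have zprop: "z (m + int k) = cocyc A m k (z m)" for m k
  proof (induction k)
    case 0 then show ?case by simp
  next
    case (Suc k)
    have e: "m + int (Suc k) - 1 = m + int k" by simp
    have "z (m + int (Suc k)) = A (m + int k) (z (m + int k))" using hrec[of "m + int (Suc k)"] by (simp only: e)
    then show ?case using Suc by simp
  qed
  have P0: "P m0 (z m0) = 0"
  proof -
    have "nrm m0 (P m0 (z m0)) \<le> (D * M) * lam ^ j" for j
    proof -
      define m where "m = m0 - int j"
      have mj: "m + int j = m0" unfolding m_def by simp
      have "P m0 (z m0) = cocyc A m j (P m (z m))" using zprop[of m j] cocyc_P[of m j] mj by simp
      also have "\<dots> = evol A m0 m (P m (z m))" using evol_eq[of m j] mj by simp
      finally have "nrm m0 (P m0 (z m0)) = nrm m0 (evol A m0 m (P m (z m)))" by simp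
      also have "\<dots> \<le> D * lam powr real_of_int (m0 - m) * nrm m (z m)" by (rule est1) (simp add: m_def)
      also have "\<dots> = D * lam ^ j * nrm m (z m)" using lam_pow[of j] by (simp add: m_def)
      also have "\<dots> \<le> D * lam ^ j * M" using bd[of m] Dpos lam by (intro mult_left_mono) auto
      finally show ?thesis by (simp add: ac_simps)
    qed
    then have "nrm m0 (P m0 (z m0)) = 0" using geo_zero[OF nrm_nn lam] by blast
    then show ?thesis using nrm_zero by blast
  qed
  define w where "w = z m0 - P m0 (z m0)"
  have Pw: "P m0 w = 0" unfolding w_def by (simp add: P_diff Pidem)
  have "nrm m0 w \<le> (D * M) * inverse mu ^ j" for j
  proof -
    define m where "m = m0 + int j"
    have "cocyc A m0 j w = z m - P m (z m)"
      unfolding w_def m_def by (simp add: cocyc_diff cocyc_P zprop)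
    then have "evol A m m0 w = z m - P m (z m)" using evol_eq[of m0 j] by (simp add: m_def)
    then have wq: "evol_back A P m0 m (z m - P m (z m)) = w"
      by (intro evol_back_eq Pw) (simp_all add: m_def)
    have "nrm m0 w \<le> D * mu powr real_of_int (m0 - m) * nrm m (z m)"
      using est2[of m0 m "z m"] wq by (simp add: m_def)
    also have "\<dots> = D * inverse mu ^ j * nrm m (z m)" using mu_pow[of j] by (simp add: m_def)
    also have "\<dots> \<le> D * inverse mu ^ j * M" using bd[of m] Dpos mu by (intro mult_left_mono) auto
    finally show ?thesis by (simp add: ac_simps)
  qed
  moreover have "0 < inverse mu" "inverse mu < 1" using mu by (auto simp: inverse_less_1_iff)
  ultimately have "nrm m0 w = 0" using geo_zero[OF nrm_nn] by blast
  then have "w = 0" using nrm_zero by blast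
  then show ?thesis using P0 unfolding w_def by simp
qed

end


context dich begin

lemma evol_step: "A (n - 1) (evol A (n - 1) (n - int (Suc j)) x) = evol A n (n - int (Suc j)) x"
proof -
  have e1: "evol A (n - 1) (n - int (Suc j)) = cocyc A (n - int (Suc j)) j"
    unfolding evol_def by simp
  have e2: "evol A n (n - int (Suc j)) = cocyc A (n - int (Suc j)) (Suc j)"
  proof -
    have "nat (n - (n - int (Suc j))) = Suc j" by simp
    then show ?thesis unfolding evol_def by (simp only:)
  qed
  have e3: "n - int (Suc j) + int j = n - 1" by simp
  show ?thesis unfolding e1 e2 by (simp only: cocyc.simps e3 comp_apply)
qed

lemma surj_core:
  assumes y: "y \<in> YB B nrm"
  shows "\<exists>x \<in> YB B nrm. TB A x = y"
proof -
  define t where "t = (\<lambda>k. nrm k (y k))"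
  have tB: "t \<in> B" using y by (simp add: YB_def t_def)
  have t0: "0 \<le> t k" for k unfolding t_def by (rule nrm_nn)
  define c1 where "c1 = (\<lambda>j::nat. D * lam ^ j)"
  define c2 where "c2 = (\<lambda>j::nat. D * inverse mu ^ Suc j)"
  have imu: "0 < inverse mu" "inverse mu < 1" using mu by (auto simp: inverse_less_1_iff)
  have c1s: "summable c1" unfolding c1_def using lam by (intro summable_mult summable_geometric) simp
  have c2s: "summable c2" unfolding c2_def using imu
    by (intro summable_mult) (simp add: summable_Suc_iff summable_geometric)
  have c1n: "0 \<le> c1 j" for j unfolding c1_def using Dpos lam by simp
  have c2n: "0 \<le> c2 j" for j unfolding c2_def using Dpos imu by simp
  obtain s1 where s1: "s1 \<in> B" "\<And>n. (\<lambda>j. c1 j * t (n + - int j)) sums s1 n"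
    using conv[OF tB c1n c1s, of "\<lambda>j. - int j"] by blast
  obtain s2 where s2: "s2 \<in> B" "\<And>n. (\<lambda>j. c2 j * t (n + int (Suc j))) sums s2 n"
    using conv[OF tB c2n c2s, of "\<lambda>j. int (Suc j)"] by blast
  define u where "u = (\<lambda>n j. evol A n (n - int j) (P (n - int j) (y (n - int j))))"
  define v where "v = (\<lambda>n j. evol_back A P n (n + int (Suc j))
       (y (n + int (Suc j)) - P (n + int (Suc j)) (y (n + int (Suc j)))))"
  have ub: "nrm n (u n j) \<le> c1 j * t (n + - int j)" for n j
  proof -
    have "nrm n (u n j) \<le> D * lam powr real_of_int (n - (n - int j)) * nrm (n - int j) (y (n - int j))"
      unfolding u_def by (rule est1) simp
    then show ?thesis using lam_pow[of j] by (simp add: c1_def t_def)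
  qed
  have vb: "nrm n (v n j) \<le> c2 j * t (n + int (Suc j))" for n j
  proof -
    have "nrm n (v n j) \<le> D * mu powr real_of_int (n - (n + int (Suc j))) * nrm (n + int (Suc j)) (y (n + int (Suc j)))"
      unfolding v_def by (rule est2) simp
    moreover have "mu powr real_of_int (n - (n + int (Suc j))) = inverse mu ^ Suc j"
      using mu_pow[of "Suc j"] by simp
    ultimately show ?thesis by (simp add: c2_def t_def)
  qed
  have us: "summable (u n)" for n
  proof -
    obtain cl where cl: "cl > 0" "\<forall>x. norm x \<le> cl * nrm n x" using nrm_lower[of n] by blast
    have "summable (\<lambda>j. cl * (c1 j * t (n + - int j)))"
      using s1(2)[of n] by (intro summable_mult) (simp add: sums_summable)
    moreover have "norm (u n j) \<le> cl * (c1 j * t (n + - int j))" for j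
    proof -
      have "norm (u n j) \<le> cl * nrm n (u n j)" using cl(2) by blast
      also have "\<dots> \<le> cl * (c1 j * t (n + - int j))" using ub[of n j] cl(1) by (intro mult_left_mono) simp_all
      finally show ?thesis .
    qed
    ultimately show ?thesis by (rule summable_comparison_test'[where N=0])
  qed
  have vs: "summable (v n)" for n
  proof -
    obtain cl where cl: "cl > 0" "\<forall>x. norm x \<le> cl * nrm n x" using nrm_lower[of n] by blast
    have "summable (\<lambda>j. cl * (c2 j * t (n + int (Suc j))))"
      using s2(2)[of n] by (intro summable_mult) (simp add: sums_summable)
    moreover have "norm (v n j) \<le> cl * (c2 j * t (n + int (Suc j)))" for j
    proof -
      have "norm (v n j) \<le> cl * nrm n (v n j)" using cl(2) by blast
      also have "\<dots> \<le> cl * (c2 j * t (n + int (Suc j)))" using vb[of n j] cl(1) by (intro mult_left_mono) simp_all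
      finally show ?thesis .
    qed
    ultimately show ?thesis by (rule summable_comparison_test'[where N=0])
  qed
  define x where "x = (\<lambda>n. suminf (u n) - suminf (v n))"
  have xb: "nrm n (x n) \<le> s1 n + s2 n" for n
  proof -
    have "nrm n (suminf (u n)) \<le> s1 n"
      using nrm_suminf_le[OF us sums_summable[OF s1(2)[of n]] ub] sums_unique[OF s1(2)[of n]] by simp
    moreover have "nrm n (suminf (v n)) \<le> s2 n"
      using nrm_suminf_le[OF vs sums_summable[OF s2(2)[of n]] vb] sums_unique[OF s2(2)[of n]] by simp
    ultimately show ?thesis unfolding x_def using nrm_diff[of n "suminf (u n)" "suminf (v n)"] by simp
  qed
  have "(\<lambda>n. nrm n (x n)) \<in> B"
    by (rule B_dom[OF Badd[OF s1(1) s2(1)]]) (simp_all add: nrm_nn xb)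
  then have xY: "x \<in> YB B nrm" unfolding YB_def by simp
  have "TB A x n = y n" for n
  proof -
    have Au: "A (n - 1) (u (n - 1) j) = u n (Suc j)" for j
    proof -
      have e: "n - 1 - int j = n - int (Suc j)" by simp
      show ?thesis unfolding u_def e using evol_step by simp
    qed
    define w where "w = (\<lambda>j. evol_back A P n (n + int j) (y (n + int j) - P (n + int j) (y (n + int j))))"
    have Av: "A (n - 1) (v (n - 1) j) = w j" for j
    proof -
      have e: "n - 1 + int (Suc j) = n + int j" by simp
      show ?thesis unfolding v_def w_def e
        by (rule A_evol_back) (simp_all add: P_diff Pidem)
    qed
    have wS: "w (Suc j) = v n j" for j unfolding w_def v_def by simp
    have w0: "w 0 = y n - P n (y n)"
      unfolding w_def by (rule evol_back_eq) (simp_all add: P_diff Pidem evol_def)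
    have u0: "u n 0 = P n (y n)" unfolding u_def by (simp add: evol_def)
    have ws: "summable w" using vs[of n] wS summable_Suc_iff[of w] by simp
    have "A (n - 1) (x (n - 1)) = A (n - 1) (suminf (u (n - 1))) - A (n - 1) (suminf (v (n - 1)))"
      unfolding x_def by (simp add: A_diff)
    also have "\<dots> = (\<Sum>j. u n (Suc j)) - (\<Sum>j. w j)"
      using bounded_linear.suminf[OF Alin us] bounded_linear.suminf[OF Alin vs] Au Av by simp
    also have "\<dots> = (suminf (u n) - P n (y n)) - (y n - P n (y n) + suminf (v n))"
      using suminf_split_head[OF us[of n]] suminf_split_head[OF ws] u0 w0 wS by simp
    finally show ?thesis unfolding TB_def x_def by (simp add: algebra_simps)
  qed
  then have "TB A x = y" by blast
  with xY show ?thesis by blast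
qed

end


context dich begin

lemma main: "bij_betw (TB A) (domTB B nrm A) (YB B nrm)"
proof -
  have inj: "inj_on (TB A) (domTB B nrm A)"
  proof (rule inj_onI)
    fix x x' assume x: "x \<in> domTB B nrm A" and x': "x' \<in> domTB B nrm A" and eq: "TB A x = TB A x'"
    define z where "z = (\<lambda>n. x n - x' n)"
    have xB: "(\<lambda>n. nrm n (x n)) \<in> B" and x'B: "(\<lambda>n. nrm n (x' n)) \<in> B"
      using x x' by (simp_all add: domTB_def YB_def)
    have "(\<lambda>n. nrm n (z n)) \<in> B"
      by (rule B_dom[OF Badd[OF xB x'B]]) (simp_all add: nrm_nn z_def nrm_diff)
    then have zY: "z \<in> YB B nrm" by (simp add: YB_def)
    have hrec: "z n = A (n - 1) (z (n - 1))" for n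
    proof -
      have "x n - A (n - 1) (x (n - 1)) = x' n - A (n - 1) (x' (n - 1))"
        using fun_cong[OF eq, of n] by (simp add: TB_def)
      then show ?thesis unfolding z_def by (simp add: A_diff algebra_simps)
    qed
    have "z n = 0" for n by (rule inj_core[OF zY hrec])
    then show "x = x'" unfolding z_def by (simp add: fun_eq_iff)
  qed
  have "TB A ` domTB B nrm A = YB B nrm"
  proof
    show "TB A ` domTB B nrm A \<subseteq> YB B nrm" by (auto simp: domTB_def)
    show "YB B nrm \<subseteq> TB A ` domTB B nrm A"
    proof
      fix y assume y: "y \<in> YB B nrm"
      obtain x where "x \<in> YB B nrm" "TB A x = y" using surj_core[OF y] by blast
      then show "y \<in> TB A ` domTB B nrm A" using y by (auto simp: domTB_def)
    qed
  qed
  with inj show ?thesis by (simp add: bij_betw_def)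
qed

end

theorem theorem3p3:
  fixes B :: "(int \<Rightarrow> real) set" and nB :: "(int \<Rightarrow> real) \<Rightarrow> real"
    and nrm :: "int \<Rightarrow> 'a::banach \<Rightarrow> real"
    and A :: "int \<Rightarrow> 'a \<Rightarrow> 'a"
  assumes "banach_seq_space B nB" and "admissible B nB"
    and "\<forall>m. equiv_norm (nrm m)"
    and "\<forall>m. bounded_linear (A m)"
    and "exp_dichotomy A nrm"
  shows "bij_betw (TB A) (domTB B nrm A) (YB B nrm)"
proof -
  obtain P :: "int \<Rightarrow> 'a \<Rightarrow> 'a" and D lam mu where
    P1: "\<forall>m. bounded_linear (P m) \<and> P m \<circ> P m = P m" and
    P2: "\<forall>m. A m \<circ> P m = P (m + 1) \<circ> A m" and
    P3: "\<forall>m. bij_betw (A m) {x. P m x = 0} {x. P (m + 1) x = 0}" and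
    c: "D > 0" "0 < lam" "lam < 1" "1 < mu" and
    e1: "\<forall>x n m. n \<ge> m \<longrightarrow>
             nrm n (evol A n m (P m x)) \<le> D * lam powr real_of_int (n - m) * nrm m x" and
    e2: "\<forall>x n m. n \<le> m \<longrightarrow>
             nrm n (evol_back A P n m (x - P m x)) \<le> D * mu powr real_of_int (n - m) * nrm m x"
    using assms(5) unfolding exp_dichotomy_def by blast
  obtain N where N: "N > 0" "\<forall>s\<in>B. \<forall>m::int. (\<lambda>n. s (n + m)) \<in> B \<and> nB (\<lambda>n. s (n + m)) \<le> N * nB s"
    using assms(2) unfolding admissible_def by blast
  have chi: "\<forall>n::int. (\<lambda>k. if k = n then 1 else 0) \<in> B \<and> nB (\<lambda>k. if k = n then 1 else 0) > 0"
    using assms(2) unfolding admissible_def by blast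
  interpret dich B nB nrm A P D lam mu N
    apply (rule dich.intro)
    subgoal by (fact assms(1))
    subgoal using chi by blast
    subgoal by (fact N(1))
    subgoal using N(2) by blast
    subgoal using assms(3) by blast
    subgoal using assms(4) by blast
    subgoal using P1 by blast
    subgoal using P1 by (metis comp_apply)
    subgoal using P2 by (metis comp_apply)
    subgoal using P3 by blast
    subgoal by (fact c(1))
    subgoal by (fact c(2))
    subgoal by (fact c(3))
    subgoal by (fact c(4))
    subgoal using e1 by blast
    subgoal using e2 by blast
    done
  show ?thesis by (rule main)
qed



end
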